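(* Let $(P_i)_{i\ge0}$ be any walk in $\mathbb Z^2$ (in particular an $\alpha$-random walk), $k\ge1$, $m\ge1$ integers. For $i\ge1$ let $X_i=1$ if $P_i$ is visible (else $0$), $X_i(m)=1$ if $P_i$ is visible at level $m$ (else $0$), $Z_i(m)=X_i(m)-X_i$, and set $$\overline S_{n,k}=\frac1n\sum_{i=1}^n X_i\cdots X_{i+k-1},\quad \overline S_{n,k}(m)=\frac1n\sum_{i=1}^n X_i(m)\cdots X_{i+k-1}(m),\quad \overline Z_n(m)=\frac1n\sum_{i=1}^n Z_i(m).$$ Then for every $n\ge1$, $$\overline S_{n,k}(m)-k\overline Z_n(m)-\frac{k^2}{2n}\le\overline S_{n,k}\le\overline S_{n,k}(m).$$
   Context: A lattice point $(a,b)$ is visible if $\gcd(a,b)=1$, and visible at level $m$ if no prime $p<m$ divides both $a$ and $b$. *)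

theory Defs
  imports "HOL-Computational_Algebra.Primes" Complex_Main
begin

definition visible :: "int \<times> int \<Rightarrow> bool" where
  "visible P \<longleftrightarrow> gcd (fst P) (snd P) = 1"

definition visible_at :: "nat \<Rightarrow> int \<times> int \<Rightarrow> bool" where
  "visible_at m P \<longleftrightarrow>
     (\<forall>p::nat. prime p \<and> p < m \<longrightarrow> \<not> (int p dvd fst P \<and> int p dvd snd P))"

definition Sbar :: "(nat \<Rightarrow> real) \<Rightarrow> nat \<Rightarrow> nat \<Rightarrow> real" where
  "Sbar X n k = (1 / real n) * (\<Sum>i=1..n. \<Prod>j=i..i+k-1. X j)"

definition Zbar :: "(nat \<Rightarrow> real) \<Rightarrow> nat \<Rightarrow> real" where
  "Zbar Z n = (1 / real n) * (\<Sum>i=1..n. Z i)"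

end

theory Submission
  imports Defs
begin

lemma vis_imp: "visible P \<Longrightarrow> visible_at m P"
  unfolding visible_def visible_at_def
proof (intro allI impI notI)
  fix p :: nat
  assume g: "gcd (fst P) (snd P) = 1" and p: "prime p \<and> p < m"
    and d: "int p dvd fst P \<and> int p dvd snd P"
  then have "int p dvd 1" by (metis gcd_greatest)
  then have "p dvd 1" by simp
  with p show False by simp
qed

lemma prod_diff_le:
  fixes a b :: "nat \<Rightarrow> real"
  assumes "finite S" "\<And>x. 0 \<le> b x" "\<And>x. b x \<le> a x" "\<And>x. a x \<le> 1"
  shows "prod a S - prod b S \<le> (\<Sum>x\<in>S. a x - b x)"
  using assms(1)
proof (induction S rule: finite_induct)
  case empty thus ?case by simp
next
  case (insert x F)
  have B0: "0 \<le> prod b F" by (rule prod_nonneg) (use assms in auto)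
  have BA: "prod b F \<le> prod a F" by (rule prod_mono) (use assms in auto)
  have A1: "prod a F \<le> 1" by (rule prod_le_1) (use assms in \<open>auto intro: order_trans[OF assms(2) assms(3)]\<close>)
  have "prod a (insert x F) - prod b (insert x F) = a x * (prod a F - prod b F) + (a x - b x) * prod b F"
    using insert by (simp add: algebra_simps)
  also have "\<dots> \<le> (prod a F - prod b F) + (a x - b x)"
  proof -
    have "a x * (prod a F - prod b F) \<le> 1 * (prod a F - prod b F)"
      by (rule mult_right_mono) (use assms BA in auto)
    moreover have "(a x - b x) * prod b F \<le> (a x - b x) * 1"
      by (rule mult_left_mono) (use assms B0 BA A1 in auto)
    ultimately show ?thesis by simp
  qed
  also have "\<dots> \<le> (\<Sum>y\<in>F. a y - b y) + (a x - b x)" using insert by simp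
  finally show ?case using insert by simp
qed

lemma shift_sum_le:
  fixes Z :: "nat \<Rightarrow> real"
  assumes "\<And>x. 0 \<le> Z x" "\<And>x. Z x \<le> 1"
  shows "(\<Sum>i=1..n. Z (i+t)) \<le> (\<Sum>i=1..n. Z i) + real t"
proof (induction t)
  case 0 then show ?case by simp
next
  case (Suc t)
  show ?case
  proof (cases n)
    case 0 then show ?thesis by simp
  next
    case (Suc n')
    have e1: "(\<Sum>i=1..n. Z (i+Suc t)) = (\<Sum>i=1..n. Z (i+t)) - Z (1+t) + Z (n+t+1)"
      unfolding Suc
      by (induction n') (simp_all add: sum.atLeast_Suc_atMost algebra_simps)
    show ?thesis using e1 Suc.IH assms[of "1+t"] assms[of "n+t+1"] by simp
  qed
qed

lemma window_sum:
  fixes Z :: "nat \<Rightarrow> real"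
  assumes "k \<ge> 1"
  shows "(\<Sum>j=i..i+k-1. Z j) = (\<Sum>t<k. Z (i+t))"
proof -
  have "{i..i+k-1} = (\<lambda>t. i+t) ` {..<k}"
  proof (intro set_eqI iffI)
    fix x assume "x \<in> {i..i+k-1}"
    then have "x - i < k" "x = i + (x - i)" using assms by auto
    then show "x \<in> (\<lambda>t. i+t) ` {..<k}" by blast
  qed auto
  moreover have "inj_on (\<lambda>t. i+t) {..<k}" by (auto simp: inj_on_def)
  ultimately show ?thesis by (simp add: sum.reindex)
qed

lemma tri_le: "(\<Sum>t<k. real t) \<le> real k ^ 2 / 2"
proof (induction k)
  case 0 then show ?case by simp
next
  case (Suc k) then show ?case by (simp add: power2_eq_square algebra_simps)
qed

theorem lemma7:
  fixes P :: "nat \<Rightarrow> int \<times> int" and k m n :: nat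
  assumes "k \<ge> 1" and "m \<ge> 1" and "n \<ge> 1"
  defines "X \<equiv> (\<lambda>i. if visible (P i) then (1::real) else 0)"
      and "Xm \<equiv> (\<lambda>i. if visible_at m (P i) then (1::real) else 0)"
  defines "Z \<equiv> (\<lambda>i. Xm i - X i)"
  shows "Sbar Xm n k - real k * Zbar Z n - real k ^ 2 / (2 * real n) \<le> Sbar X n k
         \<and> Sbar X n k \<le> Sbar Xm n k"
proof -
  have X0: "\<And>x. 0 \<le> X x" and X1: "\<And>x. X x \<le> Xm x" and Xm1: "\<And>x. Xm x \<le> 1"
    using vis_imp unfolding X_def Xm_def by auto
  have Z0: "\<And>x. 0 \<le> Z x" and Z1: "\<And>x. Z x \<le> 1"
    unfolding Z_def using X0 X1 Xm1 by (smt (verit))+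
  have np: "real n > 0" using assms by simp
  have le1: "(\<Sum>i=1..n. \<Prod>j=i..i+k-1. X j) \<le> (\<Sum>i=1..n. \<Prod>j=i..i+k-1. Xm j)"
    by (intro sum_mono prod_mono) (use X0 X1 in auto)
  have "(\<Sum>i=1..n. \<Prod>j=i..i+k-1. Xm j) - (\<Sum>i=1..n. \<Prod>j=i..i+k-1. X j)
      = (\<Sum>i=1..n. (\<Prod>j=i..i+k-1. Xm j) - (\<Prod>j=i..i+k-1. X j))"
    by (simp add: sum_subtractf)
  also have "\<dots> \<le> (\<Sum>i=1..n. \<Sum>j=i..i+k-1. Z j)"
    unfolding Z_def by (intro sum_mono prod_diff_le) (use X0 X1 Xm1 in auto)
  also have "\<dots> = (\<Sum>i=1..n. \<Sum>t<k. Z (i+t))"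
    using window_sum[OF assms(1)] by simp
  also have "\<dots> = (\<Sum>t<k. \<Sum>i=1..n. Z (i+t))" by (rule sum.swap)
  also have "\<dots> \<le> (\<Sum>t<k. (\<Sum>i=1..n. Z i) + real t)"
    by (intro sum_mono shift_sum_le) (use Z0 Z1 in auto)
  also have "\<dots> = real k * (\<Sum>i=1..n. Z i) + (\<Sum>t<k. real t)"
    by (simp add: sum.distrib)
  also have "\<dots> \<le> real k * (\<Sum>i=1..n. Z i) + real k ^ 2 / 2"
    using tri_le[of k] by simp
  finally have main: "(\<Sum>i=1..n. \<Prod>j=i..i+k-1. Xm j) - (\<Sum>i=1..n. \<Prod>j=i..i+k-1. X j)
      \<le> real k * (\<Sum>i=1..n. Z i) + real k ^ 2 / 2" .
  have "Sbar Xm n k - Sbar X n k \<le> real k * Zbar Z n + real k ^ 2 / (2 * real n)"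
  proof -
    have "Sbar Xm n k - Sbar X n k = ((\<Sum>i=1..n. \<Prod>j=i..i+k-1. Xm j) - (\<Sum>i=1..n. \<Prod>j=i..i+k-1. X j)) / real n"
      unfolding Sbar_def by (simp add: diff_divide_distrib)
    also have "\<dots> \<le> (real k * (\<Sum>i=1..n. Z i) + real k ^ 2 / 2) / real n"
      using main np by (simp add: divide_right_mono)
    also have "\<dots> = real k * Zbar Z n + real k ^ 2 / (2 * real n)"
      unfolding Zbar_def using np by (simp add: field_simps)
    finally show ?thesis .
  qed
  moreover have "Sbar X n k \<le> Sbar Xm n k"
    unfolding Sbar_def using le1 np by (simp add: divide_right_mono)
  ultimately show ?thesis by linarith
qed

end
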